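(* Given a Stackelberg game $(G,L,F)$ and $\lambda=[\lambda_p]_{p\in L}\in[0,1]^{|L|}$, the problem o-SCE($\lambda$) — find an SCE $\mathbf{x}=[x_\pi]\in\mathbf{X}^{SCE}$ maximizing $f_\lambda(\mathbf{x})=\sum_{p\in L}\sum_{s\in S}\lambda_p u_p(s)x_\varnothing(s)$ among all SCEs — can be solved with $|L|+2$ queries to a stability oracle $\mathcal{O}$ for $G$ (and no other access to the game beyond trivial bookkeeping).
   Context: A finite game is $G=(N,\{S_p\}_{p\in N},\{u_p\}_{p\in N})$ with players $N=\{1,\dots,n\}$, finite nonempty strategy sets $S_p$, and utilities $u_p:S\to\mathbb{R}$ on $S=\prod_{p\in N}S_p$; write $s=(s_p,s_{-p})$ with $s_{-p}\in S_{-p}=\prod_{q\neq p}S_q$. $\mathcal{X}=\Delta(S)$ is the set of probability distributions on $S$ and $u_p(x)=\sum_{s\in S}x(s)u_p(s)$ for $x\in\mathcal{X}$. For $P\subseteq N$, $\mathcal{X}^{CE}_P$ is the set of $x\in\mathcal{X}$ such that for every $p\in P$ and all $s_p\neq s_p'\in S_p$: $\sum_{s_{-p}\in S_{-p}} x(s_p,s_{-p})\,(u_p(s_p,s_{-p})-u_p(s_p',s_{-p}))\ge 0$; $\mathcal{X}^{CE}=\mathcal{X}^{CE}_N$ is the set of correlated equilibria of $G$. A Stackelberg game (SG) is a triple $(G,L,F)$ with $L\cup F=N$ and $L\cap F=\emptyset$ (leaders and followers). For $P\subseteq N$, $\Pi_P$ is the set of ordered subsets of $P$ (finite sequences of pairwise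 distinct elements of $P$, including the empty sequence $\varnothing$); for $\pi\in\Pi_P$ and $p\in P$ not occurring in $\pi$, $\pi p$ is $\pi$ with $p$ appended; when used as a set, $\pi$ means its set of entries. $\mathbf{X}=\prod_{\pi\in\Pi_L}\mathcal{X}^{CE}_{\pi\cup F}$, with elements $\mathbf{x}=[x_\pi]_{\pi\in\Pi_L}$. For $\mathbf{x}\in\mathbf{X}$ and $\pi\in\Pi_L$, $x_\pi$ is stable if $u_p(x_\pi)\ge u_p(x_{\pi p})$ for all $p\in L\setminus\pi$; $\mathbf{x}$ is stable if $x_\varnothing$ is stable, and perfectly stable if $x_\pi$ is stable for every $\pi\in\Pi_L$; $\mathbf{X}^{S}$ and $\mathbf{X}^{PS}$ denote the sets of stable and perfectly stable elements of $\mathbf{X}$. For $\mathbf{X}'\subseteq\mathbf{X}$ and $\pi\in\Pi_L$, $\mathcal{P}_{L\setminus\pi}(\mathbf{X}')$ is the set of Pareto optimal elements of $\{x'_\pi:\mathbf{x}'\in\mathbf{X}'\}$ with respect to the objectives $u_p$, $p\in L\setminus\pi$ (an element $y$ of the set is Pareto optimal if no $y'$ in the set satisfies $u_p(y')\ge u_p(y)$ for all $p\in L\setminus\pi$ with strict inequality for some such $p$). $\mathbf{x}\in\mathbf{X}$ is an SCE if $\mathbf{x}\in\mathbf{X}^S$ and $x_\varnothing\in\mathcal{P}_L(\mathbf{X}^S)$; $\mathbf{X}^{SCE}$ is the set of SCEs. A stability oracle $\mathcal{O}(G,c,L^\ast,\{x_p\}_{p\in L'})$ is an algorithm that, given the game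 $G$, a coefficient vector $c=[c_p]\in[-1,1]^n$, a set $L^\ast\subseteq N$, and distributions $x_p\in\mathcal{X}$ for $p$ in some $L'\subseteq L^\ast$, returns some $x\in\mathcal{X}^{CE}_{N\setminus L^\ast}$ maximizing $\sum_{p\in N}\sum_{s\in S}c_pu_p(s)x(s)$ subject to the stability constraints $u_p(x)\ge u_p(x_p)$ for all $p\in L'$. *)

theory Defs
  imports Complex_Main "HOL-Library.FuncSet"
begin

(* Players are 0..<n; a strategy profile is an element of PiE {..<n} Sp;
   u p s is the utility of player p at profile s. *)
type_synonym 'a dist = "(nat \<Rightarrow> 'a) \<Rightarrow> real"
type_synonym 'a query = "(nat \<Rightarrow> real) \<times> nat set \<times> (nat \<Rightarrow> 'a dist option)"
type_synonym 'a transcript = "('a query \<times> 'a dist) list"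

definition profiles :: "nat \<Rightarrow> (nat \<Rightarrow> 'a set) \<Rightarrow> (nat \<Rightarrow> 'a) set" where
  "profiles n Sp = PiE {..<n} Sp"

definition finite_game :: "nat \<Rightarrow> (nat \<Rightarrow> 'a set) \<Rightarrow> bool" where
  "finite_game n Sp \<longleftrightarrow> 0 < n \<and> (\<forall>p<n. finite (Sp p) \<and> Sp p \<noteq> {})"

definition is_dist :: "nat \<Rightarrow> (nat \<Rightarrow> 'a set) \<Rightarrow> 'a dist \<Rightarrow> bool" where
  "is_dist n Sp x \<longleftrightarrow> (\<forall>s. s \<notin> profiles n Sp \<longrightarrow> x s = 0)
     \<and> (\<forall>s\<in>profiles n Sp. 0 \<le> x s) \<and> (\<Sum>s\<in>profiles n Sp. x s) = 1"

definition EU :: "nat \<Rightarrow> (nat \<Rightarrow> 'a set) \<Rightarrow> (nat \<Rightarrow> (nat \<Rightarrow> 'a) \<Rightarrow> real) \<Rightarrow> nat \<Rightarrow> 'a dist \<Rightarrow> real" where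
  "EU n Sp u p x = (\<Sum>s\<in>profiles n Sp. x s * u p s)"

definition CE_P :: "nat \<Rightarrow> (nat \<Rightarrow> 'a set) \<Rightarrow> (nat \<Rightarrow> (nat \<Rightarrow> 'a) \<Rightarrow> real) \<Rightarrow> nat set \<Rightarrow> 'a dist set" where
  "CE_P n Sp u P = {x. is_dist n Sp x \<and>
     (\<forall>p\<in>P. \<forall>a\<in>Sp p. \<forall>b\<in>Sp p. a \<noteq> b \<longrightarrow>
        0 \<le> (\<Sum>s\<in>{s\<in>profiles n Sp. s p = a}. x s * (u p s - u p (s(p := b)))))}"

definition ordered_subsets :: "nat set \<Rightarrow> nat list set" where
  "ordered_subsets L = {\<pi>. distinct \<pi> \<and> set \<pi> \<subseteq> L}"

(* bold X; followers F = N - L *)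
definition bigX :: "nat \<Rightarrow> (nat \<Rightarrow> 'a set) \<Rightarrow> (nat \<Rightarrow> (nat \<Rightarrow> 'a) \<Rightarrow> real) \<Rightarrow> nat set
    \<Rightarrow> (nat list \<Rightarrow> 'a dist) set" where
  "bigX n Sp u L = {x. \<forall>\<pi>\<in>ordered_subsets L. x \<pi> \<in> CE_P n Sp u (set \<pi> \<union> ({..<n} - L))}"

definition stable_at :: "nat \<Rightarrow> (nat \<Rightarrow> 'a set) \<Rightarrow> (nat \<Rightarrow> (nat \<Rightarrow> 'a) \<Rightarrow> real) \<Rightarrow> nat set
    \<Rightarrow> (nat list \<Rightarrow> 'a dist) \<Rightarrow> nat list \<Rightarrow> bool" where
  "stable_at n Sp u L x \<pi> \<longleftrightarrow> (\<forall>p\<in>L - set \<pi>. EU n Sp u p (x \<pi>) \<ge> EU n Sp u p (x (\<pi> @ [p])))"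

definition XS :: "nat \<Rightarrow> (nat \<Rightarrow> 'a set) \<Rightarrow> (nat \<Rightarrow> (nat \<Rightarrow> 'a) \<Rightarrow> real) \<Rightarrow> nat set
    \<Rightarrow> (nat list \<Rightarrow> 'a dist) set" where
  "XS n Sp u L = {x \<in> bigX n Sp u L. stable_at n Sp u L x []}"

definition pareto_set :: "nat \<Rightarrow> (nat \<Rightarrow> 'a set) \<Rightarrow> (nat \<Rightarrow> (nat \<Rightarrow> 'a) \<Rightarrow> real) \<Rightarrow> nat set
    \<Rightarrow> 'a dist set \<Rightarrow> 'a dist set" where
  "pareto_set n Sp u P Y = {y \<in> Y. \<not> (\<exists>y'\<in>Y. (\<forall>p\<in>P. EU n Sp u p y' \<ge> EU n Sp u p y)
                                          \<and> (\<exists>p\<in>P. EU n Sp u p y' > EU n Sp u p y))}"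

definition pareto_proj :: "nat \<Rightarrow> (nat \<Rightarrow> 'a set) \<Rightarrow> (nat \<Rightarrow> (nat \<Rightarrow> 'a) \<Rightarrow> real) \<Rightarrow> nat set
    \<Rightarrow> nat list \<Rightarrow> (nat list \<Rightarrow> 'a dist) set \<Rightarrow> 'a dist set" where
  "pareto_proj n Sp u L \<pi> X' = pareto_set n Sp u (L - set \<pi>) ((\<lambda>x'. x' \<pi>) ` X')"

definition XSCE :: "nat \<Rightarrow> (nat \<Rightarrow> 'a set) \<Rightarrow> (nat \<Rightarrow> (nat \<Rightarrow> 'a) \<Rightarrow> real) \<Rightarrow> nat set
    \<Rightarrow> (nat list \<Rightarrow> 'a dist) set" where
  "XSCE n Sp u L = {x \<in> XS n Sp u L. x [] \<in> pareto_proj n Sp u L [] (XS n Sp u L)}"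

definition f_lambda :: "nat \<Rightarrow> (nat \<Rightarrow> 'a set) \<Rightarrow> (nat \<Rightarrow> (nat \<Rightarrow> 'a) \<Rightarrow> real) \<Rightarrow> nat set
    \<Rightarrow> (nat \<Rightarrow> real) \<Rightarrow> (nat list \<Rightarrow> 'a dist) \<Rightarrow> real" where
  "f_lambda n Sp u L lam x = (\<Sum>p\<in>L. \<Sum>s\<in>profiles n Sp. lam p * u p s * x [] s)"

(* Stability oracle for G: on every admissible query (c, Lstar, x_p for p in L')
   (encoded as partial map with domain L' contained in Lstar), whenever the optimisation
   problem has an optimal solution, the oracle returns one. *)
definition oracle_feasible :: "nat \<Rightarrow> (nat \<Rightarrow> 'a set) \<Rightarrow> (nat \<Rightarrow> (nat \<Rightarrow> 'a) \<Rightarrow> real)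
    \<Rightarrow> nat set \<Rightarrow> (nat \<Rightarrow> 'a dist option) \<Rightarrow> 'a dist set" where
  "oracle_feasible n Sp u Ls xs = {x \<in> CE_P n Sp u ({..<n} - Ls).
      \<forall>p xp. xs p = Some xp \<longrightarrow> EU n Sp u p x \<ge> EU n Sp u p xp}"

definition oracle_obj :: "nat \<Rightarrow> (nat \<Rightarrow> 'a set) \<Rightarrow> (nat \<Rightarrow> (nat \<Rightarrow> 'a) \<Rightarrow> real)
    \<Rightarrow> (nat \<Rightarrow> real) \<Rightarrow> 'a dist \<Rightarrow> real" where
  "oracle_obj n Sp u c x = (\<Sum>p<n. \<Sum>s\<in>profiles n Sp. c p * u p s * x s)"

definition stability_oracle :: "nat \<Rightarrow> (nat \<Rightarrow> 'a set) \<Rightarrow> (nat \<Rightarrow> (nat \<Rightarrow> 'a) \<Rightarrow> real)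
    \<Rightarrow> ('a query \<Rightarrow> 'a dist) \<Rightarrow> bool" where
  "stability_oracle n Sp u Orc \<longleftrightarrow>
    (\<forall>c Ls xs. (\<forall>p<n. \<bar>c p\<bar> \<le> 1) \<longrightarrow> Ls \<subseteq> {..<n} \<longrightarrow> dom xs \<subseteq> Ls \<longrightarrow>
       (\<forall>p xp. xs p = Some xp \<longrightarrow> is_dist n Sp xp) \<longrightarrow>
       (\<exists>z\<in>oracle_feasible n Sp u Ls xs. \<forall>z'\<in>oracle_feasible n Sp u Ls xs.
           oracle_obj n Sp u c z' \<le> oracle_obj n Sp u c z) \<longrightarrow>
       Orc (c, Ls, xs) \<in> oracle_feasible n Sp u Ls xs \<and>
       (\<forall>z'\<in>oracle_feasible n Sp u Ls xs. oracle_obj n Sp u c z' \<le> oracle_obj n Sp u c (Orc (c, Ls, xs))))"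

(* Adaptive interaction: the algorithm chooses the next query (or stops) from
   the transcript of previous queries/answers; run with a budget of k queries. *)
fun run :: "('a transcript \<Rightarrow> 'a query option) \<Rightarrow> ('a query \<Rightarrow> 'a dist) \<Rightarrow> nat
    \<Rightarrow> 'a transcript \<Rightarrow> 'a transcript" where
  "run nxt Orc 0 tr = tr"
| "run nxt Orc (Suc k) tr = (case nxt tr of None \<Rightarrow> tr
                           | Some q \<Rightarrow> run nxt Orc k (tr @ [(q, Orc q)]))"

end

theory Submission
  imports Defs "HOL-Library.Nat_Bijection"
begin


lemma farkas_nat:
  fixes A :: "nat \<Rightarrow> 'v \<Rightarrow> real" and B :: "nat \<Rightarrow> real"
  assumes "finite V" "finite I"
    and "\<not>(\<exists>x. \<forall>i\<in>I. B i \<le> (\<Sum>v\<in>V. A i v * x v))"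
  shows "\<exists>l. (\<forall>i\<in>I. 0 \<le> l i) \<and> (\<forall>v\<in>V. (\<Sum>i\<in>I. l i * A i v) = 0) \<and> 0 < (\<Sum>i\<in>I. l i * B i)"
  using assms
proof (induction V arbitrary: I A B rule: finite_induct)
  case empty
  then obtain i where i: "i \<in> I" "B i > 0" by force
  have e: "(\<Sum>j\<in>I. (if j = i then 1 else 0) * B j) = B i"
    using i empty by (simp add: if_distrib[where f="\<lambda>x. x * _"] cong: if_cong)
  show ?case
    by (rule exI[of _ "\<lambda>j. if j = i then 1 else 0"]) (use i e in auto)
next
  case (insert w V)
  define P where "P = {i\<in>I. A i w > 0}"
  define N where "N = {i\<in>I. A i w < 0}"
  define Z where "Z = {i\<in>I. A i w = 0}"
  define cd :: "nat \<times> nat \<Rightarrow> nat" where "cd pq = 2 * prod_encode pq + 1" for pq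
  define comb :: "(nat \<Rightarrow> real) \<Rightarrow> nat \<Rightarrow> real" where
    "comb F k = (if even k then F (k div 2) else (case prod_decode (k div 2) of (p,q) \<Rightarrow> (- A q w) * F p + A p w * F q))" for F k
  define I' where "I' = (\<lambda>i. 2*i) ` Z \<union> cd ` (P \<times> N)"
  define A' where "A' k v = comb (\<lambda>i. A i v) k" for k v
  define B' where "B' = comb B"
  have fin: "finite P" "finite N" "finite Z" using insert.prems(1) by (auto simp: P_def N_def Z_def)
  have comb_even: "comb F (2*i) = F i" for F i by (simp add: comb_def)
  have comb_odd: "comb F (cd (p,q)) = (- A q w) * F p + A p w * F q" for F p q
    by (simp add: comb_def cd_def)
  have comb_odd': "comb F (cd pq) = (- A (snd pq) w) * F (fst pq) + A (fst pq) w * F (snd pq)" for F pq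
    by (cases pq) (simp add: comb_odd)
  have inj_cd: "inj_on cd (P \<times> N)"
    by (auto simp: inj_on_def cd_def prod_encode_eq)
  have inj2: "inj_on (\<lambda>i::nat. 2*i) Z" by (auto simp: inj_on_def)
  have disj: "(\<lambda>i. 2*i) ` Z \<inter> cd ` (P \<times> N) = {}"
    by (auto simp: cd_def) presburger
  have finI': "finite I'" using fin by (simp add: I'_def)
  have sumI': "(\<Sum>k\<in>I'. g k) = (\<Sum>i\<in>Z. g (2*i)) + (\<Sum>pq\<in>P\<times>N. g (cd pq))" for g :: "nat \<Rightarrow> real"
    unfolding I'_def using fin disj
    by (simp add: sum.union_disjoint sum.reindex[OF inj2] sum.reindex[OF inj_cd])
  have infeas: "\<not>(\<exists>x. \<forall>k\<in>I'. B' k \<le> (\<Sum>v\<in>V. A' k v * x v))"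
  proof
    assume "\<exists>x. \<forall>k\<in>I'. B' k \<le> (\<Sum>v\<in>V. A' k v * x v)"
    then obtain x where x: "\<forall>k\<in>I'. B' k \<le> (\<Sum>v\<in>V. A' k v * x v)" by blast
    define r where "r i = (\<Sum>v\<in>V. A i v * x v)" for i
    have rZ: "B i \<le> r i" if "i \<in> Z" for i
      using x[rule_format, of "2*i"] that by (auto simp: I'_def A'_def B'_def comb_even r_def)
    have rPN: "(- A q w) * B p + A p w * B q \<le> (- A q w) * r p + A p w * r q" if "p\<in>P" "q\<in>N" for p q
    proof -
      have mem: "cd (p,q) \<in> I'" using that by (force simp: I'_def)
      have e1: "(\<Sum>v\<in>V. ((- A q w) * A p v + A p w * A q v) * x v)
          = (\<Sum>v\<in>V. (- A q w) * (A p v * x v)) + (\<Sum>v\<in>V. A p w * (A q v * x v))"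
        by (simp add: sum.distrib[symmetric] algebra_simps)
      have e2: "(\<Sum>v\<in>V. ((- A q w) * A p v + A p w * A q v) * x v) = (- A q w) * r p + A p w * r q"
        unfolding e1 r_def by (simp add: sum_distrib_left)
      from x[rule_format, OF mem] show ?thesis
        using e2 by (simp add: A'_def B'_def comb_odd)
    qed
    define lo where "lo p = (B p - r p) / A p w" for p
    define hi where "hi q = (B q - r q) / A q w" for q
    have lohi: "lo p \<le> hi q" if "p\<in>P" "q\<in>N" for p q
    proof -
      have a: "A p w > 0" and c: "A q w < 0" using that by (auto simp: P_def N_def)
      have "(B p - r p) * A q w \<ge> (B q - r q) * A p w" using rPN[OF that] by (simp add: algebra_simps)
      then have "(B p - r p) / A p w \<le> (B q - r q) / A q w"
        using a c by (simp add: pos_divide_le_eq neg_le_divide_eq pos_le_divide_eq mult.commute)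
      then show ?thesis by (simp add: lo_def hi_def)
    qed
    define t where "t = (if P = {} then (if N = {} then 0 else Min (hi ` N)) else Max (lo ` P))"
    have tlo: "lo p \<le> t" if "p \<in> P" for p
      using that fin by (auto simp: t_def)
    have thi: "t \<le> hi q" if "q \<in> N" for q
    proof (cases "P = {}")
      case True then show ?thesis using that fin by (auto simp: t_def)
    next
      case False then show ?thesis using that fin lohi by (auto simp: t_def Max_le_iff)
    qed
    have "\<forall>i\<in>I. B i \<le> (\<Sum>v\<in>insert w V. A i v * (x(w := t)) v)"
    proof
      fix i assume i: "i \<in> I"
      have e: "(\<Sum>v\<in>insert w V. A i v * (x(w := t)) v) = A i w * t + r i"
        using insert.hyps by (simp add: r_def sum.insert) (rule sum.cong, auto)
      consider "i \<in> Z" | "i \<in> P" | "i \<in> N" using i by (force simp: Z_def P_def N_def)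
      then show "B i \<le> (\<Sum>v\<in>insert w V. A i v * (x(w := t)) v)"
      proof cases
        case 1 then show ?thesis using rZ e by (simp add: Z_def)
      next
        case 2
        have a: "A i w > 0" using 2 by (simp add: P_def)
        have "(B i - r i) / A i w \<le> t" using tlo[OF 2] by (simp add: lo_def)
        then have "B i - r i \<le> t * A i w" using a by (simp add: pos_divide_le_eq)
        then show ?thesis using e by (simp add: algebra_simps)
      next
        case 3
        have a: "A i w < 0" using 3 by (simp add: N_def)
        have "t \<le> (B i - r i) / A i w" using thi[OF 3] by (simp add: hi_def)
        then have "B i - r i \<le> t * A i w" using a by (simp add: neg_le_divide_eq)
        then show ?thesis using e by (simp add: algebra_simps)
      qed
    qed
    then show False using insert.prems(2) by blast
  qed
  from insert.IH[OF finI' infeas] obtain l' where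
    l'nn: "\<forall>k\<in>I'. 0 \<le> l' k" and l'A: "\<forall>v\<in>V. (\<Sum>k\<in>I'. l' k * A' k v) = 0" and l'B: "0 < (\<Sum>k\<in>I'. l' k * B' k)"
    by blast
  define l where "l i = (if i \<in> Z then l' (2*i) else 0)
      + (if i \<in> P then (\<Sum>q\<in>N. l' (cd (i,q)) * (- A q w)) else 0)
      + (if i \<in> N then (\<Sum>p\<in>P. l' (cd (p,i)) * A p w) else 0)" for i
  have ZPN: "Z \<subseteq> I" "P \<subseteq> I" "N \<subseteq> I" by (auto simp: Z_def P_def N_def)
  have key: "(\<Sum>i\<in>I. l i * F i) = (\<Sum>k\<in>I'. l' k * comb F k)" for F
  proof -
    have "(\<Sum>i\<in>I. l i * F i) = (\<Sum>i\<in>I. (if i \<in> Z then l' (2*i) * F i else 0))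
       + (\<Sum>i\<in>I. (if i \<in> P then (\<Sum>q\<in>N. l' (cd (i,q)) * (- A q w)) * F i else 0))
       + (\<Sum>i\<in>I. (if i \<in> N then (\<Sum>p\<in>P. l' (cd (p,i)) * A p w) * F i else 0))"
      by (simp only: sum.distrib[symmetric]) (rule sum.cong, simp_all add: l_def distrib_right)
    also have "\<dots> = (\<Sum>i\<in>Z. l' (2*i) * F i) + (\<Sum>i\<in>P. (\<Sum>q\<in>N. l' (cd (i,q)) * (- A q w)) * F i)
       + (\<Sum>i\<in>N. (\<Sum>p\<in>P. l' (cd (p,i)) * A p w) * F i)"
      using insert.prems(1) ZPN by (simp add: sum.If_cases Int_absorb1)
    also have "\<dots> = (\<Sum>i\<in>Z. l' (2*i) * F i) + (\<Sum>(p,q)\<in>P\<times>N. l' (cd (p,q)) * ((- A q w) * F p + A p w * F q))"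
    proof -
      have h1: "(\<Sum>i\<in>P. (\<Sum>q\<in>N. l' (cd (i,q)) * (- A q w)) * F i)
          = (\<Sum>(p,q)\<in>P\<times>N. l' (cd (p,q)) * (- A q w) * F p)"
        by (simp add: sum_distrib_right sum.cartesian_product)
      have h2: "(\<Sum>i\<in>N. (\<Sum>p\<in>P. l' (cd (p,i)) * A p w) * F i)
          = (\<Sum>(p,q)\<in>P\<times>N. l' (cd (p,q)) * A p w * F q)"
        by (simp add: sum_distrib_right sum.cartesian_product[symmetric]) (rule sum.swap)
      have h3: "(\<Sum>(p,q)\<in>P\<times>N. l' (cd (p,q)) * (- A q w) * F p) + (\<Sum>(p,q)\<in>P\<times>N. l' (cd (p,q)) * A p w * F q)
          = (\<Sum>(p,q)\<in>P\<times>N. l' (cd (p,q)) * ((- A q w) * F p + A p w * F q))"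
        by (simp add: sum.distrib[symmetric] split_def algebra_simps)
      show ?thesis unfolding h1 h2 h3[symmetric] by simp
    qed
    also have "\<dots> = (\<Sum>k\<in>I'. l' k * comb F k)"
      by (simp add: sumI' comb_even comb_odd' case_prod_beta')
    finally show ?thesis .
  qed
  show ?case
  proof (intro exI conjI ballI)
    fix i assume "i \<in> I"
    have c1: "0 \<le> l' (cd (p,q))" if "p \<in> P" "q \<in> N" for p q
      using l'nn that by (force simp: I'_def)
    have c2: "0 \<le> l' (2*j)" if "j \<in> Z" for j
      using l'nn that by (force simp: I'_def)
    have c3: "0 \<le> (\<Sum>q\<in>N. l' (cd (i,q)) * (- A q w))" if "i \<in> P"
      using c1 that by (intro sum_nonneg) (auto simp: N_def intro!: mult_nonneg_nonpos)
    have c4: "0 \<le> (\<Sum>p\<in>P. l' (cd (p,i)) * A p w)" if "i \<in> N"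
      using c1 that by (intro sum_nonneg) (auto simp: P_def intro!: mult_nonneg_nonneg)
    show "0 \<le> l i" unfolding l_def
      using c2 c3 c4 by (intro add_nonneg_nonneg) auto
  next
    fix v assume v: "v \<in> insert w V"
    show "(\<Sum>i\<in>I. l i * A i v) = 0"
    proof (cases "v = w")
      case True
      have "(\<Sum>i\<in>I. l i * A i v) = (\<Sum>k\<in>I'. l' k * comb (\<lambda>i. A i w) k)" using key True by simp
      also have "\<dots> = 0" by (simp add: sumI' comb_even comb_odd' Z_def case_prod_beta')
      finally show ?thesis .
    next
      case False
      then have "v \<in> V" using v by simp
      then show ?thesis using key l'A by (simp add: A'_def)
    qed
  next
    show "0 < (\<Sum>i\<in>I. l i * B i)" using key l'B by (simp add: B'_def)
  qed
qed


lemma farkas: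
  fixes A :: "'i \<Rightarrow> 'v \<Rightarrow> real" and B :: "'i \<Rightarrow> real"
  assumes "finite V" "finite I"
    and "\<not>(\<exists>x. \<forall>i\<in>I. B i \<le> (\<Sum>v\<in>V. A i v * x v))"
  shows "\<exists>l. (\<forall>i\<in>I. 0 \<le> l i) \<and> (\<forall>v\<in>V. (\<Sum>i\<in>I. l i * A i v) = 0) \<and> 0 < (\<Sum>i\<in>I. l i * B i)"
proof -
  obtain f where f: "bij_betw f {0..<card I} I" using ex_bij_betw_nat_finite[OF assms(2)] by blast
  have inf: "\<not>(\<exists>x. \<forall>k\<in>{0..<card I}. B (f k) \<le> (\<Sum>v\<in>V. A (f k) v * x v))"
  proof
    assume "\<exists>x. \<forall>k\<in>{0..<card I}. B (f k) \<le> (\<Sum>v\<in>V. A (f k) v * x v)"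
    then obtain x where x: "\<forall>k\<in>{0..<card I}. B (f k) \<le> (\<Sum>v\<in>V. A (f k) v * x v)" by blast
    have "\<forall>i\<in>I. B i \<le> (\<Sum>v\<in>V. A i v * x v)"
    proof
      fix i assume "i \<in> I"
      then obtain k where "k \<in> {0..<card I}" "i = f k" using f by (metis bij_betw_def imageE)
      then show "B i \<le> (\<Sum>v\<in>V. A i v * x v)" using x by blast
    qed
    then show False using assms(3) by blast
  qed
  from farkas_nat[OF assms(1) _ inf] obtain l' where l':
    "\<forall>k\<in>{0..<card I}. 0 \<le> l' k" "\<forall>v\<in>V. (\<Sum>k\<in>{0..<card I}. l' k * A (f k) v) = 0"
    "0 < (\<Sum>k\<in>{0..<card I}. l' k * B (f k))" by auto
  define g where "g = inv_into {0..<card I} f"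
  have gf: "g (f k) = k" if "k \<in> {0..<card I}" for k
    using f that unfolding g_def by (simp add: bij_betw_inv_into_left)
  have re: "(\<Sum>i\<in>I. h i) = (\<Sum>k\<in>{0..<card I}. h (f k))" for h :: "'i \<Rightarrow> real"
    using sum.reindex_bij_betw[OF f, of h] by simp
  have re2: "(\<Sum>i\<in>I. l' (g i) * h i) = (\<Sum>k\<in>{0..<card I}. l' k * h (f k))" for h :: "'i \<Rightarrow> real"
    unfolding re by (rule sum.cong) (auto simp: gf)
  show ?thesis
  proof (intro exI[of _ "\<lambda>i. l' (g i)"] conjI ballI)
    fix i assume "i \<in> I"
    then have "g i \<in> {0..<card I}" using f unfolding g_def
      by (metis bij_betw_def inv_into_into)
    then show "0 \<le> l' (g i)" using l' by blast
  next
    fix v assume "v \<in> V" then show "(\<Sum>i\<in>I. l' (g i) * A i v) = 0" using l' re2 by simp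
  next
    show "0 < (\<Sum>i\<in>I. l' (g i) * B i)" using l' re2 by simp
  qed
qed

lemma weak_dual:
  fixes A :: "'i \<Rightarrow> 'v \<Rightarrow> real" and B :: "'i \<Rightarrow> real"
  assumes "finite V" "finite I" "\<forall>i\<in>I. 0 \<le> l i" "\<forall>i\<in>I. B i \<le> (\<Sum>v\<in>V. A i v * x v)"
  shows "(\<Sum>i\<in>I. l i * B i) \<le> (\<Sum>v\<in>V. (\<Sum>i\<in>I. l i * A i v) * x v)"
proof -
  have "(\<Sum>i\<in>I. l i * B i) \<le> (\<Sum>i\<in>I. l i * (\<Sum>v\<in>V. A i v * x v))"
    using assms by (intro sum_mono mult_left_mono; simp)
  also have "\<dots> = (\<Sum>v\<in>V. (\<Sum>i\<in>I. l i * A i v) * x v)"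
    by (simp add: sum_distrib_left sum_distrib_right mult.assoc) (rule sum.swap)
  finally show ?thesis .
qed

lemma lp_max:
  fixes A :: "'i \<Rightarrow> 'v \<Rightarrow> real" and B :: "'i \<Rightarrow> real" and c :: "'v \<Rightarrow> real"
  assumes fin: "finite V" "finite I"
    and feas: "\<exists>x. \<forall>i\<in>I. B i \<le> (\<Sum>v\<in>V. A i v * x v)"
    and bnd: "\<And>x. \<forall>i\<in>I. B i \<le> (\<Sum>v\<in>V. A i v * x v) \<Longrightarrow> (\<Sum>v\<in>V. c v * x v) \<le> M"
  shows "\<exists>x. (\<forall>i\<in>I. B i \<le> (\<Sum>v\<in>V. A i v * x v)) \<and>
     (\<forall>y. (\<forall>i\<in>I. B i \<le> (\<Sum>v\<in>V. A i v * y v)) \<longrightarrow> (\<Sum>v\<in>V. c v * y v) \<le> (\<Sum>v\<in>V. c v * x v))"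
proof -
  define F where "F = {x. \<forall>i\<in>I. B i \<le> (\<Sum>v\<in>V. A i v * x v)}"
  define S where "S = (\<lambda>x. \<Sum>v\<in>V. c v * x v) ` F"
  define T where "T = Sup S"
  have Sne: "S \<noteq> {}" using feas by (auto simp: S_def F_def)
  have Sbd: "bdd_above S" using bnd by (auto simp: S_def F_def bdd_above_def)
  have up: "(\<Sum>v\<in>V. c v * y v) \<le> T" if "y \<in> F" for y
    unfolding T_def using Sbd that by (auto simp: S_def intro: cSup_upper)
  have "\<exists>x\<in>F. T \<le> (\<Sum>v\<in>V. c v * x v)"
  proof (rule ccontr)
    assume nx: "\<not> (\<exists>x\<in>F. T \<le> (\<Sum>v\<in>V. c v * x v))"
    define A2 where "A2 k = (case k of None \<Rightarrow> c | Some i \<Rightarrow> A i)" for k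
    define B2 where "B2 k = (case k of None \<Rightarrow> T | Some i \<Rightarrow> B i)" for k
    have inf: "\<not>(\<exists>x. \<forall>k\<in>insert None (Some ` I). B2 k \<le> (\<Sum>v\<in>V. A2 k v * x v))"
      using nx by (auto simp: F_def A2_def B2_def)
    from farkas[OF fin(1) _ inf] fin obtain l where
      l: "\<forall>k\<in>insert None (Some ` I). 0 \<le> l k"
         "\<forall>v\<in>V. (\<Sum>k\<in>insert None (Some ` I). l k * A2 k v) = 0"
         "0 < (\<Sum>k\<in>insert None (Some ` I). l k * B2 k)" by auto
    have sp: "(\<Sum>k\<in>insert None (Some ` I). h k) = h None + (\<Sum>i\<in>I. h (Some i))" for h :: "'i option \<Rightarrow> real"
      using fin by (simp add: sum.insert sum.reindex)
    define \<mu> where "\<mu> = l None"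
    define l1 where "l1 i = l (Some i)" for i
    have mu0: "0 \<le> \<mu>" using l by (simp add: \<mu>_def)
    have l1nn: "\<forall>i\<in>I. 0 \<le> l1 i" using l by (simp add: l1_def)
    have lA: "\<forall>v\<in>V. \<mu> * c v + (\<Sum>i\<in>I. l1 i * A i v) = 0"
      using l(2) by (simp add: sp \<mu>_def l1_def A2_def)
    have lB: "0 < \<mu> * T + (\<Sum>i\<in>I. l1 i * B i)"
      using l(3) by (simp add: sp \<mu>_def l1_def B2_def)
    obtain x0 where x0: "x0 \<in> F" using feas by (auto simp: F_def)
    show False
    proof (cases "\<mu> = 0")
      case True
      have "(\<Sum>i\<in>I. l1 i * B i) \<le> (\<Sum>v\<in>V. (\<Sum>i\<in>I. l1 i * A i v) * x0 v)"
        using weak_dual[OF fin l1nn] x0 by (auto simp: F_def)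
      also have "\<dots> = 0" using lA True by simp
      finally show False using lB True by simp
    next
      case False
      then have mpos: "0 < \<mu>" using mu0 by simp
      define T' where "T' = - (\<Sum>i\<in>I. l1 i * B i) / \<mu>"
      have "T' < T" using lB mpos by (simp add: T'_def field_simps)
      moreover have "T \<le> T'"
        unfolding T_def
      proof (rule cSup_least[OF Sne])
        fix s assume "s \<in> S"
        then obtain y where y: "y \<in> F" "s = (\<Sum>v\<in>V. c v * y v)" by (auto simp: S_def)
        have "(\<Sum>i\<in>I. l1 i * B i) \<le> (\<Sum>v\<in>V. (\<Sum>i\<in>I. l1 i * A i v) * y v)"
          using weak_dual[OF fin l1nn] y by (auto simp: F_def)
        also have "\<dots> = (\<Sum>v\<in>V. (- \<mu> * c v) * y v)"
          proof (rule sum.cong)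
          fix v assume "v \<in> V"
          then have "(\<Sum>i\<in>I. l1 i * A i v) = - \<mu> * c v" using lA by (simp add: eq_neg_iff_add_eq_0 add.commute)
          then show "(\<Sum>i\<in>I. l1 i * A i v) * y v = (- \<mu> * c v) * y v" by simp
        qed simp
        also have "\<dots> = - \<mu> * s" using y by (simp add: sum_distrib_left mult.assoc)
        finally show "s \<le> T'" using mpos by (simp add: T'_def field_simps)
      qed
      ultimately show False by simp
    qed
  qed
  then obtain x where x: "x \<in> F" "T \<le> (\<Sum>v\<in>V. c v * x v)" by blast
  show ?thesis
  proof (intro exI conjI allI impI)
    show "\<forall>i\<in>I. B i \<le> (\<Sum>v\<in>V. A i v * x v)" using x(1) by (simp add: F_def)
  next
    fix y assume "\<forall>i\<in>I. B i \<le> (\<Sum>v\<in>V. A i v * y v)"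
    then have "y \<in> F" by (simp add: F_def)
    then show "(\<Sum>v\<in>V. c v * y v) \<le> (\<Sum>v\<in>V. c v * x v)" using up x(2) by (meson order_trans)
  qed
qed



lemma sum_ind_mult:
  fixes f :: "'b \<Rightarrow> real"
  assumes "finite S"
  shows "(\<Sum>v\<in>S. (if v = a then c else 0) * f v) = (if a \<in> S then c * f a else 0)"
proof -
  have "(\<Sum>v\<in>S. (if v = a then c else 0) * f v) = (\<Sum>v\<in>S. if v = a then c * f a else 0)"
    by (rule sum.cong) auto
  then show ?thesis using assms by (simp add: sum.delta)
qed

datatype 'b sidx = QPos 'b | QGe | QLe | BGe 'b | BLe 'b

lemma stationary:
  fixes y :: "'b \<Rightarrow> 'b \<Rightarrow> real"
  assumes S: "finite S" "S \<noteq> {}" and y: "\<forall>a\<in>S. \<forall>b\<in>S. 0 \<le> y a b"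
  shows "\<exists>q. (\<forall>a\<in>S. 0 \<le> q a) \<and> (\<Sum>a\<in>S. q a) = 1 \<and>
             (\<forall>b\<in>S. (\<Sum>a\<in>S. q a * y a b) = q b * (\<Sum>c\<in>S. y b c))"
proof -
  define K where "K = QPos ` S \<union> {QGe, QLe} \<union> BGe ` S \<union> BLe ` S"
  define A where "A k v = (case k of QPos a \<Rightarrow> (if v = a then 1 else 0) | QGe \<Rightarrow> 1 | QLe \<Rightarrow> -1
       | BGe b \<Rightarrow> y v b - (if v = b then (\<Sum>c\<in>S. y b c) else 0)
       | BLe b \<Rightarrow> - (y v b - (if v = b then (\<Sum>c\<in>S. y b c) else 0)))" for k v
  define B :: "'b sidx \<Rightarrow> real" where "B k = (case k of QGe \<Rightarrow> 1 | QLe \<Rightarrow> -1 | _ \<Rightarrow> 0)" for k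
  have finK: "finite K" using S by (simp add: K_def)
  have sK: "(\<Sum>k\<in>K. h k) = (\<Sum>a\<in>S. h (QPos a)) + h QGe + h QLe + (\<Sum>b\<in>S. h (BGe b)) + (\<Sum>b\<in>S. h (BLe b))"
    for h :: "'b sidx \<Rightarrow> real"
  proof -
    have i1: "inj_on QPos S" "inj_on BGe S" "inj_on BLe S" by (auto simp: inj_on_def)
    have "sum h (QPos ` S \<union> BGe ` S \<union> BLe ` S) = sum h (QPos ` S \<union> BGe ` S) + sum h (BLe ` S)"
      using S by (intro sum.union_disjoint) auto
    also have "sum h (QPos ` S \<union> BGe ` S) = sum h (QPos ` S) + sum h (BGe ` S)"
      using S by (intro sum.union_disjoint) auto
    finally have "sum h (QPos ` S \<union> BGe ` S \<union> BLe ` S) = (\<Sum>a\<in>S. h (QPos a)) + (\<Sum>b\<in>S. h (BGe b)) + (\<Sum>b\<in>S. h (BLe b))"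
      by (simp add: sum.reindex[OF i1(1)] sum.reindex[OF i1(2)] sum.reindex[OF i1(3)])
    moreover have "K = insert QGe (insert QLe (QPos ` S \<union> BGe ` S \<union> BLe ` S))" by (auto simp: K_def)
    moreover have "QGe \<notin> insert QLe (QPos ` S \<union> BGe ` S \<union> BLe ` S)" "QLe \<notin> QPos ` S \<union> BGe ` S \<union> BLe ` S" by auto
    ultimately show ?thesis using S by (simp add: sum.insert algebra_simps)
  qed
  have bal: "(\<Sum>v\<in>S. (y v b - (if v = b then (\<Sum>c\<in>S. y b c) else 0)) * x v)
        = (\<Sum>a\<in>S. x a * y a b) - x b * (\<Sum>c\<in>S. y b c)" if "b \<in> S" for b x
  proof -
    have "(\<Sum>v\<in>S. (y v b - (if v = b then (\<Sum>c\<in>S. y b c) else 0)) * x v)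
        = (\<Sum>v\<in>S. x v * y v b) - (\<Sum>v\<in>S. (if v = b then (\<Sum>c\<in>S. y b c) * x v else 0))"
      by (simp only: sum_subtractf[symmetric]) (rule sum.cong, auto simp: algebra_simps)
    also have "\<dots> = (\<Sum>a\<in>S. x a * y a b) - x b * (\<Sum>c\<in>S. y b c)"
      using S that by (simp add: sum.delta)
    finally show ?thesis .
  qed
  show ?thesis
  proof (cases "\<exists>x. \<forall>k\<in>K. B k \<le> (\<Sum>v\<in>S. A k v * x v)")
    case True
    then obtain x where x: "\<forall>k\<in>K. B k \<le> (\<Sum>v\<in>S. A k v * x v)" by blast
    show ?thesis
    proof (intro exI[of _ x] conjI ballI)
      fix a assume "a \<in> S"
      then have "QPos a \<in> K" by (simp add: K_def)
      from x[rule_format, OF this] show "0 \<le> x a" using \<open>a \<in> S\<close> S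
        by (simp add: A_def B_def sum_ind_mult)
    next
      have "QGe \<in> K" "QLe \<in> K" by (auto simp: K_def)
      from x[rule_format, OF this(1)] x[rule_format, OF this(2)]
      show "(\<Sum>a\<in>S. x a) = 1" by (simp add: A_def B_def sum_negf)
    next
      fix b assume b: "b \<in> S"
      then have mem: "BGe b \<in> K" "BLe b \<in> K" by (auto simp: K_def)
      define t where "t v = y v b - (if v = b then (\<Sum>c\<in>S. y b c) else 0)" for v
      from x[rule_format, OF mem(1)] x[rule_format, OF mem(2)]
      have h: "0 \<le> (\<Sum>v\<in>S. t v * x v)" "0 \<le> (\<Sum>v\<in>S. (- t v) * x v)"
        by (simp_all only: A_def B_def t_def sidx.case)
      have "(\<Sum>v\<in>S. (- t v) * x v) = - (\<Sum>v\<in>S. t v * x v)" by (simp add: sum_negf[symmetric])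
      then have "0 \<le> (\<Sum>v\<in>S. (y v b - (if v = b then (\<Sum>c\<in>S. y b c) else 0)) * x v)"
           "0 \<le> - (\<Sum>v\<in>S. (y v b - (if v = b then (\<Sum>c\<in>S. y b c) else 0)) * x v)"
        using h by (simp_all add: t_def)
      then show "(\<Sum>a\<in>S. x a * y a b) = x b * (\<Sum>c\<in>S. y b c)" using bal[OF b, of x] by simp
    qed
  next
    case False
    from farkas[OF S(1) finK False] obtain l where
      l: "\<forall>k\<in>K. 0 \<le> l k" "\<forall>v\<in>S. (\<Sum>k\<in>K. l k * A k v) = 0" "0 < (\<Sum>k\<in>K. l k * B k)" by blast
    define z where "z b = l (BGe b) - l (BLe b)" for b
    define \<gamma> where "\<gamma> = l QGe - l QLe"
    have g: "0 < \<gamma>" using l(3) by (simp add: sK B_def \<gamma>_def)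
    have "Min (z ` S) \<in> z ` S" using S by (intro Min_in) auto
    then obtain v where v0: "v \<in> S" "z v = Min (z ` S)" by auto
    have v: "v \<in> S" "\<forall>c\<in>S. z v \<le> z c" using v0 S by auto
    have "(\<Sum>k\<in>K. l k * A k v) = l (QPos v) + \<gamma> + (\<Sum>b\<in>S. z b * (y v b - (if v = b then (\<Sum>c\<in>S. y b c) else 0)))"
    proof -
      define t where "t b = y v b - (if v = b then (\<Sum>c\<in>S. y b c) else 0)" for b
      have p1: "(\<Sum>a\<in>S. l (QPos a) * A (QPos a) v) = l (QPos v)"
      proof -
        have "(\<Sum>a\<in>S. l (QPos a) * A (QPos a) v) = (\<Sum>a\<in>S. if a = v then l (QPos v) else 0)"
          by (rule sum.cong) (auto simp: A_def)
        then show ?thesis using S v(1) by (simp add: sum.delta)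
      qed
      have p2: "(\<Sum>b\<in>S. l (BGe b) * A (BGe b) v) + (\<Sum>b\<in>S. l (BLe b) * A (BLe b) v) = (\<Sum>b\<in>S. z b * t b)"
        by (simp only: sum.distrib[symmetric]) (rule sum.cong, auto simp: A_def t_def z_def algebra_simps)
      have p3: "l QGe * A QGe v + l QLe * A QLe v = \<gamma>" by (simp add: A_def \<gamma>_def)
      show ?thesis unfolding sK using p1 p2 p3 by (simp add: t_def algebra_simps)
    qed
    also have "(\<Sum>b\<in>S. z b * (y v b - (if v = b then (\<Sum>c\<in>S. y b c) else 0))) = (\<Sum>c\<in>S. y v c * (z c - z v))"
    proof -
      have "(\<Sum>b\<in>S. z b * (y v b - (if v = b then (\<Sum>c\<in>S. y b c) else 0)))
          = (\<Sum>b\<in>S. z b * y v b) - (\<Sum>b\<in>S. if v = b then z b * (\<Sum>c\<in>S. y b c) else 0)"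
        by (simp add: sum_subtractf[symmetric] algebra_simps if_distrib cong: if_cong)
      also have "\<dots> = (\<Sum>b\<in>S. z b * y v b) - z v * (\<Sum>c\<in>S. y v c)" using S v(1) by (simp add: sum.delta)
      also have "\<dots> = (\<Sum>c\<in>S. y v c * (z c - z v))"
        by (simp add: sum_distrib_left sum_subtractf algebra_simps)
      finally show ?thesis .
    qed
    finally have eq: "(\<Sum>k\<in>K. l k * A k v) = l (QPos v) + \<gamma> + (\<Sum>c\<in>S. y v c * (z c - z v))" .
    have "0 \<le> (\<Sum>c\<in>S. y v c * (z c - z v))" using y v by (intro sum_nonneg mult_nonneg_nonneg) auto
    moreover have "0 \<le> l (QPos v)" using l(1) v(1) by (simp add: K_def)
    ultimately have "0 < (\<Sum>k\<in>K. l k * A k v)" using eq g by simp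
    then show ?thesis using l(2) v(1) by simp
  qed
qed



datatype ('s,'a) cix = Pos 's | SGe | SLe | CEc nat 'a 'a | Stab nat

definition ceix :: "nat \<times> 'a \<times> 'a \<Rightarrow> ('s, 'a) cix" where
  "ceix t = CEc (fst t) (fst (snd t)) (snd (snd t))"

definition cI :: "nat \<Rightarrow> (nat \<Rightarrow> 'a set) \<Rightarrow> nat set \<Rightarrow> nat set \<Rightarrow> (nat \<Rightarrow> 'a, 'a) cix set" where
  "cI n Sp P D = Pos ` profiles n Sp \<union> {SGe, SLe} \<union> ceix ` (SIGMA p:P. Sp p \<times> Sp p) \<union> Stab ` D"

definition cA :: "(nat \<Rightarrow> (nat \<Rightarrow> 'a) \<Rightarrow> real) \<Rightarrow> (nat \<Rightarrow> 'a, 'a) cix \<Rightarrow> (nat \<Rightarrow> 'a) \<Rightarrow> real" where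
  "cA u k v = (case k of Pos s \<Rightarrow> (if v = s then 1 else 0) | SGe \<Rightarrow> 1 | SLe \<Rightarrow> -1
      | CEc p a b \<Rightarrow> (if v p = a then u p v - u p (v(p := b)) else 0) | Stab p \<Rightarrow> u p v)"

definition cB :: "nat \<Rightarrow> (nat \<Rightarrow> 'a set) \<Rightarrow> (nat \<Rightarrow> (nat \<Rightarrow> 'a) \<Rightarrow> real) \<Rightarrow> (nat \<Rightarrow> 'a dist option)
    \<Rightarrow> (nat \<Rightarrow> 'a, 'a) cix \<Rightarrow> real" where
  "cB n Sp u xs k = (case k of SGe \<Rightarrow> 1 | SLe \<Rightarrow> -1 | Stab p \<Rightarrow> EU n Sp u p (the (xs p)) | _ \<Rightarrow> 0)"

lemma fin_prof: "finite_game n Sp \<Longrightarrow> finite (profiles n Sp)"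
  unfolding finite_game_def profiles_def by (intro finite_PiE) auto

lemma sum_cI:
  fixes h :: "(nat \<Rightarrow> 'a, 'a) cix \<Rightarrow> real"
  assumes fg: "finite_game n Sp" and P: "P \<subseteq> {..<n}" and D: "finite D"
  shows "(\<Sum>k\<in>cI n Sp P D. h k) = (\<Sum>s\<in>profiles n Sp. h (Pos s)) + h SGe + h SLe
     + (\<Sum>t\<in>(SIGMA p:P. Sp p \<times> Sp p). h (ceix t)) + (\<Sum>p\<in>D. h (Stab p))"
proof -
  let ?V = "profiles n Sp" and ?T = "SIGMA p:P. Sp p \<times> Sp p"
  have fV: "finite ?V" using fin_prof[OF fg] .
  have fT: "finite ?T" using fg P unfolding finite_game_def by (intro finite_SigmaI) (auto intro: finite_subset)
  have i1: "inj_on Pos ?V" "inj_on ceix ?T" "inj_on Stab D" by (auto simp: inj_on_def ceix_def prod_eq_iff)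
  have "sum h (Pos ` ?V \<union> ceix ` ?T \<union> Stab ` D)
      = sum h (Pos ` ?V \<union> ceix ` ?T) + sum h (Stab ` D)"
    using fV fT D by (intro sum.union_disjoint) (auto simp: ceix_def)
  also have "sum h (Pos ` ?V \<union> ceix ` ?T) = sum h (Pos ` ?V) + sum h (ceix ` ?T)"
    using fV fT by (intro sum.union_disjoint) (auto simp: ceix_def)
  finally have e: "sum h (Pos ` ?V \<union> ceix ` ?T \<union> Stab ` D)
     = (\<Sum>s\<in>?V. h (Pos s)) + (\<Sum>t\<in>?T. h (ceix t)) + (\<Sum>p\<in>D. h (Stab p))"
    by (simp add: sum.reindex[OF i1(1)] sum.reindex[OF i1(2)] sum.reindex[OF i1(3)])
  have K: "cI n Sp P D = insert SGe (insert SLe (Pos ` ?V \<union> ceix ` ?T \<union> Stab ` D))"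
    by (auto simp: cI_def)
  have n1: "SGe \<notin> insert SLe (Pos ` ?V \<union> ceix ` ?T \<union> Stab ` D)"
    and n2: "SLe \<notin> Pos ` ?V \<union> ceix ` ?T \<union> Stab ` D" by (auto simp: ceix_def)
  show ?thesis unfolding K using fV fT D n1 n2 e by (simp add: sum.insert algebra_simps)
qed


lemma upd_prof: "v \<in> profiles n Sp \<Longrightarrow> p < n \<Longrightarrow> b \<in> Sp p \<Longrightarrow> v(p := b) \<in> profiles n Sp"
  unfolding profiles_def by (auto simp: PiE_iff extensional_def)

lemma sum_filter_mult:
  fixes x :: "'s \<Rightarrow> real"
  assumes "finite V"
  shows "(\<Sum>s\<in>{s\<in>V. P s}. x s * g s) = (\<Sum>v\<in>V. (if P v then g v else 0) * x v)"
  using assms by (simp add: sum.inter_filter) (rule sum.cong, auto)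

lemma EU_sum: "EU n Sp u p x = (\<Sum>v\<in>profiles n Sp. u p v * x v)"
  unfolding EU_def by (simp add: mult.commute)

lemma cons_of_feas:
  assumes fg: "finite_game n Sp" and Ls: "Ls \<subseteq> {..<n}"
    and x: "x \<in> oracle_feasible n Sp u Ls xs"
  shows "\<forall>k\<in>cI n Sp ({..<n} - Ls) (dom xs). cB n Sp u xs k \<le> (\<Sum>v\<in>profiles n Sp. cA u k v * x v)"
proof
  let ?V = "profiles n Sp"
  have fV: "finite ?V" using fin_prof[OF fg] .
  have xd: "is_dist n Sp x" and xce: "x \<in> CE_P n Sp u ({..<n} - Ls)"
    and xst: "\<And>p xp. xs p = Some xp \<Longrightarrow> EU n Sp u p x \<ge> EU n Sp u p xp"
    using x by (auto simp: oracle_feasible_def CE_P_def)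
  fix k assume k: "k \<in> cI n Sp ({..<n} - Ls) (dom xs)"
  then consider (pos) s where "k = Pos s" "s \<in> ?V" | (ge) "k = SGe" | (le) "k = SLe"
    | (ce) p a b where "k = CEc p a b" "p \<in> {..<n} - Ls" "a \<in> Sp p" "b \<in> Sp p"
    | (st) p where "k = Stab p" "p \<in> dom xs"
    unfolding cI_def ceix_def by (auto simp: domI)
  then show "cB n Sp u xs k \<le> (\<Sum>v\<in>?V. cA u k v * x v)"
  proof cases
    case pos
    then show ?thesis using xd fV by (simp add: cA_def cB_def sum_ind_mult is_dist_def)
  next
    case ge then show ?thesis using xd by (simp add: cA_def cB_def is_dist_def)
  next
    case le then show ?thesis using xd by (simp add: cA_def cB_def is_dist_def sum_negf)
  next
    case ce
    show ?thesis
    proof (cases "a = b")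
      case True
      have "(\<Sum>v\<in>?V. cA u k v * x v) = 0"
        by (rule sum.neutral) (auto simp: cA_def ce True fun_upd_idem)
      then show ?thesis by (simp add: cB_def ce)
    next
      case False
      have "0 \<le> (\<Sum>s\<in>{s\<in>?V. s p = a}. x s * (u p s - u p (s(p := b))))"
        using xce ce False by (auto simp: CE_P_def)
      also have "\<dots> = (\<Sum>v\<in>?V. cA u k v * x v)"
        unfolding sum_filter_mult[OF fV] by (simp add: cA_def ce)
      finally show ?thesis by (simp add: cB_def ce)
    qed
  next
    case st
    then obtain xp where xp: "xs p = Some xp" by auto
    then show ?thesis using xst[OF xp] by (simp add: cA_def cB_def st EU_sum)
  qed
qed

definition ext0 :: "nat \<Rightarrow> (nat \<Rightarrow> 'a set) \<Rightarrow> 'a dist \<Rightarrow> 'a dist" where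
  "ext0 n Sp x = (\<lambda>s. if s \<in> profiles n Sp then x s else 0)"

lemma sum_ext0: "(\<Sum>v\<in>profiles n Sp. f v * ext0 n Sp x v) = (\<Sum>v\<in>profiles n Sp. f v * x v)"
  by (rule sum.cong) (auto simp: ext0_def)

lemma feas_of_cons:
  assumes fg: "finite_game n Sp" and Ls: "Ls \<subseteq> {..<n}"
    and c: "\<forall>k\<in>cI n Sp ({..<n} - Ls) (dom xs). cB n Sp u xs k \<le> (\<Sum>v\<in>profiles n Sp. cA u k v * x v)"
  shows "ext0 n Sp x \<in> oracle_feasible n Sp u Ls xs"
proof -
  let ?V = "profiles n Sp" and ?y = "ext0 n Sp x"
  have fV: "finite ?V" using fin_prof[OF fg] .
  have nn: "0 \<le> x s" if "s \<in> ?V" for s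
  proof -
    have "Pos s \<in> cI n Sp ({..<n} - Ls) (dom xs)" using that by (simp add: cI_def)
    from c[rule_format, OF this] show ?thesis using that fV by (simp add: cA_def cB_def sum_ind_mult)
  qed
  have s1: "(\<Sum>s\<in>?V. x s) = 1"
  proof -
    have "SGe \<in> cI n Sp ({..<n} - Ls) (dom xs)" "SLe \<in> cI n Sp ({..<n} - Ls) (dom xs)" by (auto simp: cI_def)
    from c[rule_format, OF this(1)] c[rule_format, OF this(2)] show ?thesis
      by (simp add: cA_def cB_def sum_negf)
  qed
  have dist: "is_dist n Sp ?y"
    unfolding is_dist_def using nn s1 by (auto simp: ext0_def)
  have ce: "?y \<in> CE_P n Sp u ({..<n} - Ls)"
    unfolding CE_P_def
  proof (intro CollectI conjI dist ballI impI)
    fix p a b assume p: "p \<in> {..<n} - Ls" and a: "a \<in> Sp p" and b: "b \<in> Sp p" and ab: "a \<noteq> b"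
    have "CEc p a b \<in> cI n Sp ({..<n} - Ls) (dom xs)" using p a b by (force simp: cI_def ceix_def)
    from c[rule_format, OF this]
    have "0 \<le> (\<Sum>v\<in>?V. cA u (CEc p a b) v * x v)" by (simp add: cB_def)
    also have "\<dots> = (\<Sum>s\<in>{s\<in>?V. s p = a}. ?y s * (u p s - u p (s(p := b))))"
      unfolding sum_filter_mult[OF fV] by (rule sum.cong) (auto simp: cA_def ext0_def)
    finally show "0 \<le> (\<Sum>s\<in>{s\<in>?V. s p = a}. ?y s * (u p s - u p (s(p := b))))" .
  qed
  have st: "EU n Sp u p ?y \<ge> EU n Sp u p xp" if "xs p = Some xp" for p xp
  proof -
    have "Stab p \<in> cI n Sp ({..<n} - Ls) (dom xs)" using that by (auto simp: cI_def)
    from c[rule_format, OF this] show ?thesis using that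
      by (simp add: cA_def cB_def EU_sum sum_ext0)
  qed
  show ?thesis unfolding oracle_feasible_def using ce st by blast
qed

lemma obj_sum: "oracle_obj n Sp u c x = (\<Sum>v\<in>profiles n Sp. (\<Sum>p<n. c p * u p v) * x v)"
  unfolding oracle_obj_def by (subst sum.swap) (simp add: sum_distrib_right)

lemma obj_ext0: "oracle_obj n Sp u c (ext0 n Sp x) = oracle_obj n Sp u c x"
  unfolding obj_sum by (rule sum_ext0)


lemma cons_dist:
  assumes fg: "finite_game n Sp"
    and c: "\<forall>k\<in>cI n Sp P D. cB n Sp u xs k \<le> (\<Sum>v\<in>profiles n Sp. cA u k v * x v)"
  shows "\<forall>s\<in>profiles n Sp. 0 \<le> x s" "(\<Sum>s\<in>profiles n Sp. x s) = 1"
proof -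
  have fV: "finite (profiles n Sp)" using fin_prof[OF fg] .
  show "\<forall>s\<in>profiles n Sp. 0 \<le> x s"
  proof
    fix s assume s: "s \<in> profiles n Sp"
    then have "Pos s \<in> cI n Sp P D" by (simp add: cI_def)
    from c[rule_format, OF this] show "0 \<le> x s" using s fV by (simp add: cA_def cB_def sum_ind_mult)
  qed
  have "SGe \<in> cI n Sp P D" "SLe \<in> cI n Sp P D" by (auto simp: cI_def)
  from c[rule_format, OF this(1)] c[rule_format, OF this(2)] show "(\<Sum>s\<in>profiles n Sp. x s) = 1"
    by (simp add: cA_def cB_def sum_negf)
qed

lemma finite_cI:
  assumes fg: "finite_game n Sp" and P: "P \<subseteq> {..<n}" and D: "finite D"
  shows "finite (cI n Sp P D)"
proof -
  have "finite (SIGMA p:P. Sp p \<times> Sp p)" using fg P unfolding finite_game_def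
    by (intro finite_SigmaI) (auto intro: finite_subset)
  then show ?thesis using fin_prof[OF fg] D by (simp add: cI_def)
qed

lemma oracle_opt:
  assumes fg: "finite_game n Sp" and Ls: "Ls \<subseteq> {..<n}" and dm: "dom xs \<subseteq> Ls"
    and z0: "z0 \<in> oracle_feasible n Sp u Ls xs"
  shows "\<exists>z\<in>oracle_feasible n Sp u Ls xs. \<forall>z'\<in>oracle_feasible n Sp u Ls xs.
           oracle_obj n Sp u c z' \<le> oracle_obj n Sp u c z"
proof -
  let ?V = "profiles n Sp" and ?I = "cI n Sp ({..<n} - Ls) (dom xs)"
  define cv where "cv v = (\<Sum>p<n. c p * u p v)" for v
  have fV: "finite ?V" using fin_prof[OF fg] .
  have fD: "finite (dom xs)" using dm Ls by (meson finite_lessThan finite_subset)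
  have fI: "finite ?I" using finite_cI[OF fg _ fD] by auto
  have bnd: "(\<Sum>v\<in>?V. cv v * x v) \<le> (\<Sum>v\<in>?V. \<bar>cv v\<bar>)"
    if "\<forall>k\<in>?I. cB n Sp u xs k \<le> (\<Sum>v\<in>?V. cA u k v * x v)" for x
  proof -
    note d = cons_dist[OF fg that]
    have "x v \<le> 1" if "v \<in> ?V" for v
    proof -
      have "x v \<le> (\<Sum>s\<in>?V. x s)" using d(1) that fV by (intro member_le_sum) auto
      then show ?thesis using d(2) by simp
    qed
    then have "cv v * x v \<le> \<bar>cv v\<bar>" if "v \<in> ?V" for v
    proof -
      have "cv v * x v \<le> \<bar>cv v\<bar> * x v" using d(1) that by (intro mult_right_mono) auto
      also have "\<dots> \<le> \<bar>cv v\<bar> * 1" using \<open>\<And>v. v \<in> ?V \<Longrightarrow> x v \<le> 1\<close>[OF that] by (intro mult_left_mono) auto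
      finally show ?thesis by simp
    qed
    then show ?thesis by (intro sum_mono) auto
  qed
  from lp_max[OF fV fI, of "cB n Sp u xs" "cA u" cv, OF exI[of _ z0] bnd]
    cons_of_feas[OF fg Ls z0]
  obtain x where x: "\<forall>k\<in>?I. cB n Sp u xs k \<le> (\<Sum>v\<in>?V. cA u k v * x v)"
    and opt: "\<And>y. \<forall>k\<in>?I. cB n Sp u xs k \<le> (\<Sum>v\<in>?V. cA u k v * y v) \<Longrightarrow> (\<Sum>v\<in>?V. cv v * y v) \<le> (\<Sum>v\<in>?V. cv v * x v)"
    by blast
  show ?thesis
  proof (intro bexI ballI)
    show "ext0 n Sp x \<in> oracle_feasible n Sp u Ls xs" by (rule feas_of_cons[OF fg Ls x])
    fix z' assume "z' \<in> oracle_feasible n Sp u Ls xs"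
    from opt[OF cons_of_feas[OF fg Ls this]]
    show "oracle_obj n Sp u c z' \<le> oracle_obj n Sp u c (ext0 n Sp x)"
      unfolding obj_ext0 by (simp add: obj_sum cv_def)
  qed
qed


lemma cA_simps[simp]: "cA u SGe v = 1" "cA u SLe v = -1"
  by (simp_all add: cA_def)

lemma ce_exists:
  assumes fg: "finite_game n Sp"
  shows "\<exists>e. e \<in> CE_P n Sp u {..<n}"
proof -
  let ?V = "profiles n Sp" and ?I = "cI n Sp {..<n} {}" and ?T = "SIGMA p:{..<n}. Sp p \<times> Sp p"
  have fV: "finite ?V" using fin_prof[OF fg] .
  have fI: "finite ?I" using finite_cI[OF fg] by simp
  have fS: "\<And>p. p < n \<Longrightarrow> finite (Sp p)" "\<And>p. p < n \<Longrightarrow> Sp p \<noteq> {}" using fg by (auto simp: finite_game_def)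
  show ?thesis
  proof (cases "\<exists>x. \<forall>k\<in>?I. cB n Sp u Map.empty k \<le> (\<Sum>v\<in>?V. cA u k v * x v)")
    case True
    then obtain x where x: "\<forall>k\<in>?I. cB n Sp u Map.empty k \<le> (\<Sum>v\<in>?V. cA u k v * x v)" by blast
    have "ext0 n Sp x \<in> oracle_feasible n Sp u {} Map.empty"
      by (rule feas_of_cons[OF fg]) (use x in auto)
    then show ?thesis by (auto simp: oracle_feasible_def)
  next
    case False
    from farkas[OF fV fI False] obtain l where
      l: "\<forall>k\<in>?I. 0 \<le> l k" "\<forall>v\<in>?V. (\<Sum>k\<in>?I. l k * cA u k v) = 0"
         "0 < (\<Sum>k\<in>?I. l k * cB n Sp u Map.empty k)" by blast
    note sI = sum_cI[OF fg order_refl finite.emptyI]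
    define \<gamma> where "\<gamma> = l SGe - l SLe"
    have g: "0 < \<gamma>" using l(3) by (simp add: sI cB_def \<gamma>_def ceix_def)
    define y where "y p a b = l (CEc p a b)" for p a b
    have ynn: "0 \<le> y p a b" if "p < n" "a \<in> Sp p" "b \<in> Sp p" for p a b
    proof -
      have "CEc p a b \<in> ?I" using that by (force simp: cI_def ceix_def)
      then show ?thesis using l(1) by (simp add: y_def)
    qed
    have posnn: "0 \<le> l (Pos v)" if "v \<in> ?V" for v using l(1) that by (simp add: cI_def)
    have eqv: "l (Pos v) + \<gamma> + (\<Sum>t\<in>?T. l (ceix t) * cA u (ceix t) v) = 0" if v: "v \<in> ?V" for v
    proof -
      have ps: "(\<Sum>s\<in>?V. l (Pos s) * cA u (Pos s) v) = l (Pos v)"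
      proof -
        have "(\<Sum>s\<in>?V. l (Pos s) * cA u (Pos s) v) = (\<Sum>s\<in>?V. if s = v then l (Pos v) else 0)"
          by (rule sum.cong) (auto simp: cA_def)
        then show ?thesis using v fV by (simp add: sum.delta)
      qed
      have "(\<Sum>k\<in>?I. l k * cA u k v) = 0" using l(2) v by simp
      then show ?thesis unfolding sI ps by (simp add: \<gamma>_def)
    qed
    have "\<forall>p\<in>{..<n}. \<exists>q. (\<forall>a\<in>Sp p. 0 \<le> q a) \<and> (\<Sum>a\<in>Sp p. q a) = 1 \<and>
             (\<forall>b\<in>Sp p. (\<Sum>a\<in>Sp p. q a * y p a b) = q b * (\<Sum>c\<in>Sp p. y p b c))"
      using fS ynn by (auto intro!: stationary)
    then obtain Q where Q: "\<And>p. p < n \<Longrightarrow> (\<forall>a\<in>Sp p. 0 \<le> Q p a) \<and> (\<Sum>a\<in>Sp p. Q p a) = 1 \<and>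
             (\<forall>b\<in>Sp p. (\<Sum>a\<in>Sp p. Q p a * y p a b) = Q p b * (\<Sum>c\<in>Sp p. y p b c))"
      by (metis bchoice lessThan_iff)
    define \<pi> where "\<pi> v = (\<Prod>r<n. Q r (v r))" for v
    define \<pi>m where "\<pi>m p v = (\<Prod>r\<in>{..<n} - {p}. Q r (v r))" for p v
    define W where "W p a = (\<Sum>v\<in>{v\<in>?V. v p = a}. \<pi>m p v * u p v)" for p a
    have vin: "v r \<in> Sp r" if "v \<in> ?V" "r < n" for v r using that by (auto simp: profiles_def PiE_iff)
    have pinn: "0 \<le> \<pi> v" if "v \<in> ?V" for v
      unfolding \<pi>_def using Q vin that by (intro prod_nonneg) auto
    have pisplit: "\<pi> v = Q p (v p) * \<pi>m p v" if "p < n" for p v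
      unfolding \<pi>_def \<pi>m_def using that by (simp add: prod.remove)
    have keyW: "(\<Sum>v\<in>?V. \<pi> v * cA u (CEc p a b) v) = Q p a * (W p a - W p b)"
      if p: "p < n" and a: "a \<in> Sp p" and b: "b \<in> Sp p" for p a b
    proof -
      let ?Va = "{v\<in>?V. v p = a}" and ?Vb = "{v\<in>?V. v p = b}"
      have fa: "finite ?Va" using fV by simp
      have "(\<Sum>v\<in>?V. \<pi> v * cA u (CEc p a b) v) = (\<Sum>v\<in>?Va. \<pi> v * (u p v - u p (v(p := b))))"
        using fV by (simp add: sum.inter_filter cA_def) (rule sum.cong, auto)
      also have "\<dots> = (\<Sum>v\<in>?Va. Q p a * (\<pi>m p v * u p v - \<pi>m p v * u p (v(p := b))))"
        by (rule sum.cong) (auto simp: pisplit[OF p] algebra_simps)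
      also have "\<dots> = Q p a * ((\<Sum>v\<in>?Va. \<pi>m p v * u p v) - (\<Sum>v\<in>?Va. \<pi>m p v * u p (v(p := b))))"
        by (simp add: sum_distrib_left[symmetric] sum_subtractf)
      also have "(\<Sum>v\<in>?Va. \<pi>m p v * u p (v(p := b))) = W p b"
      proof -
        have inj: "inj_on (\<lambda>v. v(p := b)) ?Va"
        proof (rule inj_onI)
          fix v w assume "v \<in> ?Va" "w \<in> ?Va" "v(p := b) = w(p := b)"
          then show "v = w" by (metis (mono_tags, lifting) fun_upd_triv fun_upd_upd mem_Collect_eq)
        qed
        have img: "(\<lambda>v. v(p := b)) ` ?Va = ?Vb"
        proof
          show "(\<lambda>v. v(p := b)) ` ?Va \<subseteq> ?Vb" using upd_prof p b by auto
        next
          show "?Vb \<subseteq> (\<lambda>v. v(p := b)) ` ?Va"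
          proof
            fix w assume w: "w \<in> ?Vb"
            then have "w = (w(p := a))(p := b)" by auto
            moreover have "w(p := a) \<in> ?Va" using w upd_prof p a by auto
            ultimately show "w \<in> (\<lambda>v. v(p := b)) ` ?Va" by blast
          qed
        qed
        have pm: "\<pi>m p (v(p := b)) = \<pi>m p v" for v unfolding \<pi>m_def by (rule prod.cong) auto
        show ?thesis unfolding W_def img[symmetric] sum.reindex[OF inj] by (simp add: pm)
      qed
      finally show ?thesis by (simp add: W_def)
    qed
    have perp: "(\<Sum>(a,b)\<in>Sp p \<times> Sp p. y p a b * (Q p a * (W p a - W p b))) = 0" if p: "p < n" for p
    proof -
      note Qp = Q[OF p]
      have "(\<Sum>(a,b)\<in>Sp p \<times> Sp p. y p a b * (Q p a * (W p a - W p b)))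
          = (\<Sum>a\<in>Sp p. \<Sum>b\<in>Sp p. Q p a * W p a * y p a b) - (\<Sum>a\<in>Sp p. \<Sum>b\<in>Sp p. Q p a * y p a b * W p b)"
        by (simp add: sum.cartesian_product[symmetric] sum_subtractf[symmetric] algebra_simps)
      also have "(\<Sum>a\<in>Sp p. \<Sum>b\<in>Sp p. Q p a * y p a b * W p b) = (\<Sum>b\<in>Sp p. (\<Sum>a\<in>Sp p. Q p a * y p a b) * W p b)"
        by (subst sum.swap) (simp add: sum_distrib_right)
      also have "\<dots> = (\<Sum>b\<in>Sp p. Q p b * W p b * (\<Sum>c\<in>Sp p. y p b c))"
        using Qp by (intro sum.cong) auto
      also have "(\<Sum>a\<in>Sp p. \<Sum>b\<in>Sp p. Q p a * W p a * y p a b) = (\<Sum>b\<in>Sp p. Q p b * W p b * (\<Sum>c\<in>Sp p. y p b c))"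
        by (simp add: sum_distrib_left)
      finally show ?thesis by simp
    qed
    have third: "(\<Sum>v\<in>?V. \<pi> v * (\<Sum>t\<in>?T. l (ceix t) * cA u (ceix t) v)) = 0"
    proof -
      have "(\<Sum>v\<in>?V. \<pi> v * (\<Sum>t\<in>?T. l (ceix t) * cA u (ceix t) v))
          = (\<Sum>t\<in>?T. l (ceix t) * (\<Sum>v\<in>?V. \<pi> v * cA u (ceix t) v))"
      proof -
        have "(\<Sum>v\<in>?V. \<pi> v * (\<Sum>t\<in>?T. l (ceix t) * cA u (ceix t) v))
            = (\<Sum>v\<in>?V. \<Sum>t\<in>?T. l (ceix t) * (\<pi> v * cA u (ceix t) v))"
          by (simp add: sum_distrib_left algebra_simps)
        also have "\<dots> = (\<Sum>t\<in>?T. \<Sum>v\<in>?V. l (ceix t) * (\<pi> v * cA u (ceix t) v))"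
          by (rule sum.swap)
        also have "\<dots> = (\<Sum>t\<in>?T. l (ceix t) * (\<Sum>v\<in>?V. \<pi> v * cA u (ceix t) v))"
          by (simp add: sum_distrib_left)
        finally show ?thesis .
      qed
      also have "\<dots> = (\<Sum>t\<in>?T. y (fst t) (fst (snd t)) (snd (snd t)) *
             (Q (fst t) (fst (snd t)) * (W (fst t) (fst (snd t)) - W (fst t) (snd (snd t)))))"
        by (rule sum.cong) (auto simp: ceix_def y_def keyW)
      also have "\<dots> = (\<Sum>p<n. \<Sum>(a,b)\<in>Sp p \<times> Sp p. y p a b * (Q p a * (W p a - W p b)))"
        using fS by (subst sum.Sigma) (auto simp: case_prod_beta' intro!: finite_cartesian_product)
      also have "\<dots> = 0" using perp by simp
      finally show ?thesis .
    qed
    have "(\<Sum>v\<in>?V. \<pi> v * (l (Pos v) + \<gamma> + (\<Sum>t\<in>?T. l (ceix t) * cA u (ceix t) v))) = 0"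
      using eqv by simp
    then have e0: "(\<Sum>v\<in>?V. \<pi> v * l (Pos v)) + \<gamma> * (\<Sum>v\<in>?V. \<pi> v) = 0"
      using third by (simp add: distrib_left sum.distrib sum_distrib_left algebra_simps)
    have "\<forall>p\<in>{..<n}. \<exists>a. a \<in> Sp p \<and> 0 < Q p a"
    proof
      fix p assume "p \<in> {..<n}"
      then have p: "p < n" by simp
      show "\<exists>a. a \<in> Sp p \<and> 0 < Q p a"
      proof (rule ccontr)
        assume "\<not> ?thesis"
        then have "\<forall>a\<in>Sp p. Q p a = 0" using Q[OF p] by force
        then show False using Q[OF p] by simp
      qed
    qed
    then obtain a0 where a0: "\<And>p. p < n \<Longrightarrow> a0 p \<in> Sp p \<and> 0 < Q p (a0 p)"
      by (metis bchoice lessThan_iff)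
    define v0 where "v0 = restrict a0 {..<n}"
    have v0V: "v0 \<in> ?V" using a0 by (auto simp: v0_def profiles_def)
    have "0 < \<pi> v0" unfolding \<pi>_def v0_def using a0 by (intro prod_pos) auto
    moreover have "\<pi> v0 \<le> (\<Sum>v\<in>?V. \<pi> v)" by (rule member_le_sum) (use pinn v0V fV in auto)
    ultimately have S: "0 < (\<Sum>v\<in>?V. \<pi> v)" by linarith
    have "0 \<le> (\<Sum>v\<in>?V. \<pi> v * l (Pos v))" using pinn posnn by (intro sum_nonneg) auto
    moreover have "0 < \<gamma> * (\<Sum>v\<in>?V. \<pi> v)" using S g by simp
    ultimately show ?thesis using e0 by linarith
  qed
qed



definition idx :: "nat set \<Rightarrow> nat \<Rightarrow> nat" where
  "idx L p = (LEAST i. sorted_list_of_set L ! i = p)"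

lemma idx:
  assumes "finite L" "p \<in> L"
  shows "idx L p < card L" "sorted_list_of_set L ! idx L p = p"
proof -
  have "p \<in> set (sorted_list_of_set L)" using assms by simp
  then obtain i where i: "i < length (sorted_list_of_set L)" "sorted_list_of_set L ! i = p"
    by (auto simp: in_set_conv_nth)
  show "sorted_list_of_set L ! idx L p = p" unfolding idx_def by (rule LeastI[of _ i]) (use i in simp)
  have "idx L p \<le> i" unfolding idx_def by (rule Least_le) (use i in simp)
  then show "idx L p < card L" using i by simp
qed

lemma run_prop:
  assumes nn: "\<forall>tr'. length tr' < K \<longrightarrow> nxt tr' \<noteq> None" and le: "length tr + m \<le> K"
  shows "length (run nxt Orc m tr) = length tr + m \<and> take (length tr) (run nxt Orc m tr) = tr \<and>
    (\<forall>i. length tr \<le> i \<and> i < length tr + m \<longrightarrow>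
       run nxt Orc m tr ! i = (the (nxt (take i (run nxt Orc m tr))), Orc (the (nxt (take i (run nxt Orc m tr))))))"
  using le
proof (induction m arbitrary: tr)
  case 0
  then show ?case by auto
next
  case (Suc m)
  then have "length tr < K" by simp
  then obtain q where q: "nxt tr = Some q" using nn by auto
  define R where "R = run nxt Orc m (tr @ [(q, Orc q)])"
  have R: "run nxt Orc (Suc m) tr = R" by (simp add: R_def q)
  have IH: "length R = length tr + 1 + m \<and> take (length tr + 1) R = tr @ [(q, Orc q)] \<and>
    (\<forall>i. length tr + 1 \<le> i \<and> i < length tr + 1 + m \<longrightarrow>
       R ! i = (the (nxt (take i R)), Orc (the (nxt (take i R)))))"
    using Suc.IH[of "tr @ [(q, Orc q)]"] Suc.prems unfolding R_def by simp
  have t1: "take (length tr) R = tr"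
  proof -
    have "take (length tr) R = take (length tr) (take (length tr + 1) R)" by simp
    also have "\<dots> = tr" using IH by simp
    finally show ?thesis .
  qed
  have nth0: "R ! length tr = (q, Orc q)"
  proof -
    have "take (length tr + 1) R ! length tr = R ! length tr" by (rule nth_take) simp
    then have "R ! length tr = take (length tr + 1) R ! length tr" by simp
    also have "\<dots> = (q, Orc q)" using IH by (simp add: nth_append)
    finally show ?thesis .
  qed
  show ?case unfolding R
  proof (intro conjI allI impI)
    show "length R = length tr + Suc m" using IH by simp
    show "take (length tr) R = tr" by (rule t1)
    fix i assume i: "length tr \<le> i \<and> i < length tr + Suc m"
    show "R ! i = (the (nxt (take i R)), Orc (the (nxt (take i R))))"
    proof (cases "i = length tr")
      case True then show ?thesis using nth0 t1 q by simp
    next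
      case False then show ?thesis using IH i by auto
    qed
  qed
qed

definition qmin :: "nat set \<Rightarrow> nat \<Rightarrow> 'a query" where
  "qmin L p = ((\<lambda>q. if q \<in> {p} then -1 else 0), L - {p}, Map.empty)"

definition nxtA :: "nat \<Rightarrow> (nat \<Rightarrow> 'a set) \<Rightarrow> nat set \<Rightarrow> (nat \<Rightarrow> real) \<Rightarrow> 'a transcript \<Rightarrow> 'a query option" where
  "nxtA n Sp L lam tr =
    (if length tr < card L then Some (qmin L (sorted_list_of_set L ! length tr))
     else if length tr = card L then
       Some ((\<lambda>q. if q \<in> L then lam q else 0), L, (\<lambda>q. if q \<in> L then Some (snd (tr ! idx L q)) else None))
     else if length tr = card L + 1 then
       Some ((\<lambda>q. if q \<in> L then 1 else 0), L, (\<lambda>q. if q \<in> L then Some (snd (tr ! card L)) else None))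
     else None)"

definition outA :: "nat \<Rightarrow> (nat \<Rightarrow> 'a set) \<Rightarrow> nat set \<Rightarrow> (nat \<Rightarrow> real) \<Rightarrow> 'a transcript
    \<Rightarrow> 'a dist \<times> (nat \<Rightarrow> 'a dist)" where
  "outA n Sp L lam tr = (snd (tr ! (card L + 1)), (\<lambda>p. snd (tr ! idx L p)))"

lemma obj_ind:
  assumes "L \<subseteq> {..<n}"
  shows "oracle_obj n Sp u (\<lambda>q. if q \<in> L then w q else 0) x = (\<Sum>q\<in>L. w q * EU n Sp u q x)"
proof -
  have "oracle_obj n Sp u (\<lambda>q. if q \<in> L then w q else 0) x
      = (\<Sum>q<n. if q \<in> L then w q * EU n Sp u q x else 0)"
    unfolding oracle_obj_def EU_def by (rule sum.cong) (auto simp: sum_distrib_left algebra_simps)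
  also have "\<dots> = (\<Sum>q\<in>{..<n} \<inter> L. w q * EU n Sp u q x)" by (simp add: sum.inter_restrict)
  also have "{..<n} \<inter> L = L" using assms by auto
  finally show ?thesis .
qed

lemma CE_mono: "P \<subseteq> Q \<Longrightarrow> CE_P n Sp u Q \<subseteq> CE_P n Sp u P"
  unfolding CE_P_def by auto

lemma feas_empty: "oracle_feasible n Sp u Ls Map.empty = CE_P n Sp u ({..<n} - Ls)"
  unfolding oracle_feasible_def by auto

lemma oracle_use:
  assumes orc: "stability_oracle n Sp u Orc" and fg: "finite_game n Sp"
    and c: "\<forall>p<n. \<bar>c p\<bar> \<le> 1" and Ls: "Ls \<subseteq> {..<n}" and dm: "dom xs \<subseteq> Ls"
    and xd: "\<forall>p xp. xs p = Some xp \<longrightarrow> is_dist n Sp xp"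
    and z0: "z0 \<in> oracle_feasible n Sp u Ls xs"
  shows "Orc (c, Ls, xs) \<in> oracle_feasible n Sp u Ls xs \<and>
     (\<forall>z'\<in>oracle_feasible n Sp u Ls xs. oracle_obj n Sp u c z' \<le> oracle_obj n Sp u c (Orc (c, Ls, xs)))"
  using orc c Ls dm xd oracle_opt[OF fg Ls dm z0, of c] unfolding stability_oracle_def by blast



lemma obj_single:
  assumes "p < n"
  shows "oracle_obj n Sp u (\<lambda>q. if q = p then -1 else 0) x = - EU n Sp u p x"
  using obj_ind[of "{p}" n Sp u "\<lambda>_. -1" x] assms by simp

lemma main_correct:
  fixes u :: "nat \<Rightarrow> (nat \<Rightarrow> 'a) \<Rightarrow> real" and Orc :: "'a query \<Rightarrow> 'a dist"
  assumes fg: "finite_game n Sp" and Ln: "L \<subseteq> {..<n}" and lam: "\<forall>p\<in>L. 0 \<le> lam p \<and> lam p \<le> 1"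
    and orc: "stability_oracle n Sp u Orc"
  shows "(let tr = run (nxtA n Sp L lam) Orc (card L + 2) [] in
          nxtA n Sp L lam tr = None \<and>
          (\<exists>x\<in>XSCE n Sp u L.
             x [] = fst (outA n Sp L lam tr) \<and>
             (\<forall>p\<in>L. x [p] = snd (outA n Sp L lam tr) p) \<and>
             (\<forall>y\<in>XSCE n Sp u L. f_lambda n Sp u L lam y \<le> f_lambda n Sp u L lam x)))"
proof -
  define m where "m = card L"
  have fL: "finite L" using Ln finite_subset by blast
  define R where "R = run (nxtA n Sp L lam) Orc (card L + 2) []"
  have nn: "\<forall>tr'. length tr' < card L + 2 \<longrightarrow> nxtA n Sp L lam tr' \<noteq> None"
    by (simp add: nxtA_def qmin_def)
  note RP = run_prop[OF nn, of "[]" "card L + 2" Orc, simplified]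
  have lenR: "length R = m + 2" using RP by (simp add: R_def m_def)
  have Ri: "\<And>i. i < m + 2 \<Longrightarrow> R ! i = (the (nxtA n Sp L lam (take i R)), Orc (the (nxtA n Sp L lam (take i R))))"
    using RP by (simp add: R_def m_def)
  have lt: "length (take i R) = i" if "i \<le> m + 2" for i using that lenR by simp
  obtain e where e: "e \<in> CE_P n Sp u {..<n}" using ce_exists[OF fg] by blast
  have eA: "e \<in> CE_P n Sp u P" if "P \<subseteq> {..<n}" for P using CE_mono[OF that] e by blast
  have edist: "is_dist n Sp e" using e by (simp add: CE_P_def)
  have setp: "{..<n} - (L - {p}) = set [p] \<union> ({..<n} - L)" if "p \<in> L" for p using that Ln by auto
  define z where "z p = Orc (qmin L p)" for p
  have Ridx: "R ! idx L p = (qmin L p, z p)" if p: "p \<in> L" for p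
  proof -
    have i: "idx L p < m" "sorted_list_of_set L ! idx L p = p" using idx[OF fL p] by (auto simp: m_def)
    then show ?thesis using Ri[of "idx L p"] lt[of "idx L p"] by (simp add: nxtA_def m_def z_def)
  qed
  have zp: "z p \<in> CE_P n Sp u ({..<n} - (L - {p})) \<and>
        (\<forall>z'\<in>CE_P n Sp u ({..<n} - (L - {p})). EU n Sp u p (z p) \<le> EU n Sp u p z')" if p: "p \<in> L" for p
  proof -
    have pn: "p < n" using p Ln by auto
    have "Orc (qmin L p) \<in> oracle_feasible n Sp u (L - {p}) Map.empty \<and>
      (\<forall>z'\<in>oracle_feasible n Sp u (L - {p}) Map.empty.
         oracle_obj n Sp u (\<lambda>q. if q \<in> {p} then -1 else 0) z'
           \<le> oracle_obj n Sp u (\<lambda>q. if q \<in> {p} then -1 else 0) (Orc (qmin L p)))"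
      unfolding qmin_def
      by (rule oracle_use[OF orc fg]) (use Ln eA[of "{..<n} - (L - {p})"] in \<open>auto simp: feas_empty\<close>)
    moreover have "{p} \<subseteq> {..<n}" using pn by auto
    ultimately show ?thesis using pn by (simp add: feas_empty obj_single z_def)
  qed
  have zd: "is_dist n Sp (z p)" if "p \<in> L" for p using zp[OF that] by (simp add: CE_P_def)
  define xs1 where "xs1 = (\<lambda>q. if q \<in> L then Some (z q) else None)"
  define Q1 where "Q1 = ((\<lambda>q. if q \<in> L then lam q else 0), L, xs1)"
  define y1 where "y1 = Orc Q1"
  have Rm: "R ! m = (Q1, y1)"
  proof -
    have "nxtA n Sp L lam (take m R) = Some Q1"
    proof -
      have "(\<lambda>q. if q \<in> L then Some (snd (take (card L) R ! idx L q)) else None) = xs1"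
      proof
        fix q show "(if q \<in> L then Some (snd (take (card L) R ! idx L q)) else None) = xs1 q"
          using Ridx idx[OF fL] by (auto simp: xs1_def m_def)
      qed
      then show ?thesis using lt[of m] by (simp add: nxtA_def Q1_def m_def)
    qed
    then show ?thesis using Ri[of m] by (simp add: y1_def)
  qed
  have y1: "y1 \<in> oracle_feasible n Sp u L xs1 \<and>
      (\<forall>z'\<in>oracle_feasible n Sp u L xs1. (\<Sum>q\<in>L. lam q * EU n Sp u q z') \<le> (\<Sum>q\<in>L. lam q * EU n Sp u q y1))"
  proof -
    have ef: "e \<in> oracle_feasible n Sp u L xs1"
      unfolding oracle_feasible_def
    proof (intro CollectI conjI allI impI)
      show "e \<in> CE_P n Sp u ({..<n} - L)" by (rule eA) auto
      fix p xp assume "xs1 p = Some xp"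
      then have p: "p \<in> L" and xp: "xp = z p" by (auto simp: xs1_def split: if_splits)
      show "EU n Sp u p xp \<le> EU n Sp u p e" using zp[OF p] eA[of "{..<n} - (L - {p})"] xp by auto
    qed
    have "Orc Q1 \<in> oracle_feasible n Sp u L xs1 \<and>
      (\<forall>z'\<in>oracle_feasible n Sp u L xs1. oracle_obj n Sp u (\<lambda>q. if q \<in> L then lam q else 0) z'
         \<le> oracle_obj n Sp u (\<lambda>q. if q \<in> L then lam q else 0) (Orc Q1))"
      unfolding Q1_def
      by (rule oracle_use[OF orc fg _ Ln _ _ ef]) (use lam zd in \<open>auto simp: xs1_def split: if_splits\<close>)
    then show ?thesis by (simp add: obj_ind[OF Ln] y1_def)
  qed
  define xs2 where "xs2 = (\<lambda>q. if q \<in> L then Some y1 else None)"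
  define Q2 where "Q2 = ((\<lambda>q. if q \<in> L then 1 else 0::real), L, xs2)"
  define y2 where "y2 = Orc Q2"
  have Rm1: "R ! (m + 1) = (Q2, y2)"
  proof -
    have tk: "take (Suc (card L)) R ! card L = R ! card L" by (rule nth_take) simp
    have Rm': "R ! card L = (Q1, y1)" using Rm by (simp add: m_def)
    have fx: "(\<lambda>q. if q \<in> L then Some (snd (take (Suc (card L)) R ! card L)) else None) = xs2"
      unfolding tk Rm' xs2_def snd_conv by (rule refl)
    have "length (take (Suc (card L)) R) = Suc (card L)" using lt[of "m+1"] by (simp add: m_def)
    then have "nxtA n Sp L lam (take (Suc (card L)) R) = Some Q2"
      unfolding nxtA_def Q2_def fx by simp
    then have "nxtA n Sp L lam (take (m+1) R) = Some Q2" by (simp add: m_def)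
    then show ?thesis using Ri[of "m+1"] by (simp add: y2_def)
  qed
  have y1d: "is_dist n Sp y1" using y1 by (simp add: oracle_feasible_def CE_P_def)
  have y2: "y2 \<in> oracle_feasible n Sp u L xs2 \<and>
      (\<forall>z'\<in>oracle_feasible n Sp u L xs2. (\<Sum>q\<in>L. EU n Sp u q z') \<le> (\<Sum>q\<in>L. EU n Sp u q y2))"
  proof -
    have ef: "y1 \<in> oracle_feasible n Sp u L xs2"
      using y1 by (auto simp: oracle_feasible_def xs2_def split: if_splits)
    have "Orc Q2 \<in> oracle_feasible n Sp u L xs2 \<and>
      (\<forall>z'\<in>oracle_feasible n Sp u L xs2. oracle_obj n Sp u (\<lambda>q. if q \<in> L then 1 else 0) z'
         \<le> oracle_obj n Sp u (\<lambda>q. if q \<in> L then 1 else 0) (Orc Q2))"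
      unfolding Q2_def
      by (rule oracle_use[OF orc fg _ Ln _ _ ef]) (use y1d in \<open>auto simp: xs2_def split: if_splits\<close>)
    then show ?thesis by (simp add: y2_def obj_ind[OF Ln, where w="\<lambda>_. 1::real", simplified])
  qed
  have y1ce: "y1 \<in> CE_P n Sp u ({..<n} - L)" and y1z: "\<And>p. p \<in> L \<Longrightarrow> EU n Sp u p (z p) \<le> EU n Sp u p y1"
    using y1 by (auto simp: oracle_feasible_def xs1_def)
  have y2ce: "y2 \<in> CE_P n Sp u ({..<n} - L)" and y2y1: "\<And>p. p \<in> L \<Longrightarrow> EU n Sp u p y1 \<le> EU n Sp u p y2"
    using y2 by (auto simp: oracle_feasible_def xs2_def)
  define x where "x \<pi> = (if \<pi> = [] then y2 else if (\<exists>p\<in>L. \<pi> = [p]) then z (hd \<pi>) else e)" for \<pi>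
  have x0: "x [] = y2" by (simp add: x_def)
  have xp: "x [p] = z p" if "p \<in> L" for p using that by (auto simp: x_def)
  have xX: "x \<in> bigX n Sp u L"
    unfolding bigX_def
  proof (intro CollectI ballI)
    fix \<pi> assume \<pi>: "\<pi> \<in> ordered_subsets L"
    show "x \<pi> \<in> CE_P n Sp u (set \<pi> \<union> ({..<n} - L))"
    proof (cases "\<pi> = []")
      case True then show ?thesis using y2ce x0 by simp
    next
      case False
      show ?thesis
      proof (cases "\<exists>p\<in>L. \<pi> = [p]")
        case True
        then obtain p where p: "p \<in> L" "\<pi> = [p]" by blast
        then show ?thesis using zp[OF p(1)] xp[OF p(1)] setp[OF p(1)] by simp
      next
        case F2: False
        then have "x \<pi> = e" using False by (simp add: x_def)
        moreover have "set \<pi> \<union> ({..<n} - L) \<subseteq> {..<n}" using \<pi> Ln by (auto simp: ordered_subsets_def)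
        ultimately show ?thesis using eA by simp
      qed
    qed
  qed
  have xS: "x \<in> XS n Sp u L"
    unfolding XS_def stable_at_def
    using xX x0 xp y2y1 y1z by (auto intro: order_trans)
  have XSfeas: "x' [] \<in> oracle_feasible n Sp u L xs1" if x': "x' \<in> XS n Sp u L" for x'
    unfolding oracle_feasible_def
  proof (intro CollectI conjI allI impI)
    have "[] \<in> ordered_subsets L" by (simp add: ordered_subsets_def)
    then show "x' [] \<in> CE_P n Sp u ({..<n} - L)" using x' by (auto simp: XS_def bigX_def)
    fix p xp assume "xs1 p = Some xp"
    then have p: "p \<in> L" and xpz: "xp = z p" by (auto simp: xs1_def split: if_splits)
    have "[p] \<in> ordered_subsets L" using p by (simp add: ordered_subsets_def)
    then have "x' [p] \<in> CE_P n Sp u ({..<n} - (L - {p}))" using x' setp[OF p] by (auto simp: XS_def bigX_def)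
    then have "EU n Sp u p (z p) \<le> EU n Sp u p (x' [p])" using zp[OF p] by blast
    also have "\<dots> \<le> EU n Sp u p (x' [])" using x' p by (auto simp: XS_def stable_at_def)
    finally show "EU n Sp u p xp \<le> EU n Sp u p (x' [])" using xpz by simp
  qed
  have fl: "f_lambda n Sp u L lam y = (\<Sum>p\<in>L. lam p * EU n Sp u p (y []))" for y
    unfolding f_lambda_def EU_def by (rule sum.cong) (auto simp: sum_distrib_left algebra_simps)
  have pareto: "x [] \<in> pareto_proj n Sp u L [] (XS n Sp u L)"
    unfolding pareto_proj_def pareto_set_def
  proof (intro CollectI conjI)
    show "x [] \<in> (\<lambda>x'. x' []) ` XS n Sp u L" using xS by blast
    show "\<not> (\<exists>y'\<in>(\<lambda>x'. x' []) ` XS n Sp u L.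
        (\<forall>p\<in>L - set []. EU n Sp u p (x []) \<le> EU n Sp u p y') \<and> (\<exists>p\<in>L - set []. EU n Sp u p (x []) < EU n Sp u p y'))"
    proof
      assume "\<exists>y'\<in>(\<lambda>x'. x' []) ` XS n Sp u L.
        (\<forall>p\<in>L - set []. EU n Sp u p (x []) \<le> EU n Sp u p y') \<and> (\<exists>p\<in>L - set []. EU n Sp u p (x []) < EU n Sp u p y')"
      then obtain x' where x': "x' \<in> XS n Sp u L" and ge: "\<forall>p\<in>L. EU n Sp u p y2 \<le> EU n Sp u p (x' [])"
        and gt: "\<exists>p\<in>L. EU n Sp u p y2 < EU n Sp u p (x' [])" by (auto simp: x0)
      have "x' [] \<in> oracle_feasible n Sp u L xs2"
        using XSfeas[OF x'] ge y2y1 by (auto simp: oracle_feasible_def xs2_def intro: order_trans)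
      then have "(\<Sum>q\<in>L. EU n Sp u q (x' [])) \<le> (\<Sum>q\<in>L. EU n Sp u q y2)" using y2 by blast
      moreover have "(\<Sum>q\<in>L. EU n Sp u q y2) < (\<Sum>q\<in>L. EU n Sp u q (x' []))"
        using fL ge gt by (intro sum_strict_mono_ex1) auto
      ultimately show False by simp
    qed
  qed
  have xSCE: "x \<in> XSCE n Sp u L" unfolding XSCE_def using xS pareto by blast
  have opt: "f_lambda n Sp u L lam y \<le> f_lambda n Sp u L lam x" if y: "y \<in> XSCE n Sp u L" for y
  proof -
    have "y \<in> XS n Sp u L" using y by (simp add: XSCE_def)
    then have "(\<Sum>q\<in>L. lam q * EU n Sp u q (y [])) \<le> (\<Sum>q\<in>L. lam q * EU n Sp u q y1)"
      using y1 XSfeas by blast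
    also have "\<dots> \<le> (\<Sum>q\<in>L. lam q * EU n Sp u q y2)"
      using lam y2y1 by (intro sum_mono mult_left_mono) auto
    finally show ?thesis unfolding fl x0 .
  qed
  have nxN: "nxtA n Sp L lam R = None" using lenR by (simp add: nxtA_def m_def)
  have o1: "fst (outA n Sp L lam R) = y2" using Rm1 by (simp add: outA_def m_def)
  have o2: "snd (outA n Sp L lam R) p = z p" if "p \<in> L" for p using Ridx[OF that] by (simp add: outA_def)
  show ?thesis unfolding Let_def R_def[symmetric]
    using nxN xSCE x0 o1 xp o2 opt by (intro conjI bexI[of _ x]) auto
qed

theorem theorem3:
  "\<exists>(nxt :: nat \<Rightarrow> (nat \<Rightarrow> 'a set) \<Rightarrow> nat set \<Rightarrow> (nat \<Rightarrow> real) \<Rightarrow> 'a transcript \<Rightarrow> 'a query option)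
     (out :: nat \<Rightarrow> (nat \<Rightarrow> 'a set) \<Rightarrow> nat set \<Rightarrow> (nat \<Rightarrow> real) \<Rightarrow> 'a transcript
               \<Rightarrow> 'a dist \<times> (nat \<Rightarrow> 'a dist)).
     \<forall>n Sp u L lam Orc.
       finite_game n Sp \<longrightarrow> L \<subseteq> {..<n} \<longrightarrow> (\<forall>p\<in>L. 0 \<le> lam p \<and> lam p \<le> 1) \<longrightarrow>
       stability_oracle n Sp u Orc \<longrightarrow>
       (let tr = run (nxt n Sp L lam) Orc (card L + 2) [] in
          nxt n Sp L lam tr = None \<and>
          (\<exists>x\<in>XSCE n Sp u L.
             x [] = fst (out n Sp L lam tr) \<and>
             (\<forall>p\<in>L. x [p] = snd (out n Sp L lam tr) p) \<and>
             (\<forall>y\<in>XSCE n Sp u L. f_lambda n Sp u L lam y \<le> f_lambda n Sp u L lam x)))"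
  by (intro exI[of _ nxtA] exI[of _ outA] allI impI) (rule main_correct)


end
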